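(* Let $G:\mathcal{C}\to\mathcal{D}$ and $H:\mathcal{D}\to\mathcal{E}$ be functors. (1) If $G$ and $H$ are naturally full, then $H\circ G$ is naturally full. (2) If $H\circ G$ is naturally full and $H$ is faithful, then $G$ is naturally full.
   Context: For a functor $F:\mathcal{A}\to\mathcal{B}$, let $\mathcal{F}:\mathrm{Hom}_{\mathcal{A}}(\bullet,\bullet)\to\mathrm{Hom}_{\mathcal{B}}(F(\bullet),F(\bullet))$ be the natural transformation (of functors $\mathcal{A}^{op}\times\mathcal{A}\to\mathbf{Sets}$) given by $\mathcal{F}_{A,A'}(f)=F(f)$. The functor $F$ is called naturally full if $\mathcal{F}$ has a right inverse, i.e. there is a natural transformation $\mathcal{P}:\mathrm{Hom}_{\mathcal{B}}(F(\bullet),F(\bullet))\to\mathrm{Hom}_{\mathcal{A}}(\bullet,\bullet)$ with $\mathcal{F}\circ\mathcal{P}=\mathrm{id}$. Explicitly: for all $A,A'$ and $u:F(A)\to F(A')$ one has $F(\mathcal{P}_{A,A'}(u))=u$, and naturality means $\mathcal{P}_{X,T}(F(h)\circ g\circ F(f))=h\circ\mathcal{P}_{Y,Z}(g)\circ f$ for all $f:X\to Y$, $h:Z\to T$ in $\mathcal{A}$ and $g:F(Y)\to F(Z)$ in $\mathcal{B}$. *)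

theory Defs
  imports Main
begin

text \<open>Categories in arrow-centric style: objects, arrows, domain, codomain,
composition (cmp C g f means g after f) and identities.\<close>

record ('o, 'm) category =
  Obj :: "'o set"
  Arr :: "'m set"
  Dom :: "'m \<Rightarrow> 'o"
  Cod :: "'m \<Rightarrow> 'o"
  cmp :: "'m \<Rightarrow> 'm \<Rightarrow> 'm"
  ident :: "'o \<Rightarrow> 'm"

definition Hom :: "('o, 'm) category \<Rightarrow> 'o \<Rightarrow> 'o \<Rightarrow> 'm set" where
  "Hom C A B = {f \<in> Arr C. Dom C f = A \<and> Cod C f = B}"

definition is_category :: "('o, 'm) category \<Rightarrow> bool" where
  "is_category C \<longleftrightarrow>
     (\<forall>f \<in> Arr C. Dom C f \<in> Obj C \<and> Cod C f \<in> Obj C) \<and>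
     (\<forall>A \<in> Obj C. ident C A \<in> Hom C A A) \<and>
     (\<forall>A \<in> Obj C. \<forall>B \<in> Obj C. \<forall>D \<in> Obj C. \<forall>f \<in> Hom C A B. \<forall>g \<in> Hom C B D.
        cmp C g f \<in> Hom C A D) \<and>
     (\<forall>A \<in> Obj C. \<forall>B \<in> Obj C. \<forall>f \<in> Hom C A B.
        cmp C (ident C B) f = f \<and> cmp C f (ident C A) = f) \<and>
     (\<forall>A \<in> Obj C. \<forall>B \<in> Obj C. \<forall>D \<in> Obj C. \<forall>E \<in> Obj C.
        \<forall>f \<in> Hom C A B. \<forall>g \<in> Hom C B D. \<forall>h \<in> Hom C D E.
        cmp C h (cmp C g f) = cmp C (cmp C h g) f)"

definition is_functor ::
  "('o1, 'm1) category \<Rightarrow> ('o2, 'm2) category \<Rightarrow> ('o1 \<Rightarrow> 'o2) \<Rightarrow> ('m1 \<Rightarrow> 'm2) \<Rightarrow> bool" where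
  "is_functor C D Fo Fm \<longleftrightarrow>
     (\<forall>A \<in> Obj C. Fo A \<in> Obj D) \<and>
     (\<forall>A \<in> Obj C. \<forall>B \<in> Obj C. \<forall>f \<in> Hom C A B. Fm f \<in> Hom D (Fo A) (Fo B)) \<and>
     (\<forall>A \<in> Obj C. Fm (ident C A) = ident D (Fo A)) \<and>
     (\<forall>A \<in> Obj C. \<forall>B \<in> Obj C. \<forall>E \<in> Obj C. \<forall>f \<in> Hom C A B. \<forall>g \<in> Hom C B E.
        Fm (cmp C g f) = cmp D (Fm g) (Fm f))"

definition faithful ::
  "('o1, 'm1) category \<Rightarrow> ('o2, 'm2) category \<Rightarrow> ('o1 \<Rightarrow> 'o2) \<Rightarrow> ('m1 \<Rightarrow> 'm2) \<Rightarrow> bool" where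
  "faithful C D Fo Fm \<longleftrightarrow>
     (\<forall>A \<in> Obj C. \<forall>B \<in> Obj C. inj_on Fm (Hom C A B))"

text \<open>Naturally full: the natural transformation Hom_C(-,-) to Hom_D(F-,F-) given by F
has a right inverse P, i.e. a natural family of maps P A A' from Hom_D(F A, F A')
to Hom_C(A, A') with F (P A A' u) = u.\<close>

definition naturally_full ::
  "('o1, 'm1) category \<Rightarrow> ('o2, 'm2) category \<Rightarrow> ('o1 \<Rightarrow> 'o2) \<Rightarrow> ('m1 \<Rightarrow> 'm2) \<Rightarrow> bool" where
  "naturally_full C D Fo Fm \<longleftrightarrow>
     (\<exists>P :: 'o1 \<Rightarrow> 'o1 \<Rightarrow> 'm2 \<Rightarrow> 'm1.
        (\<forall>A \<in> Obj C. \<forall>A' \<in> Obj C. \<forall>u \<in> Hom D (Fo A) (Fo A').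
            P A A' u \<in> Hom C A A' \<and> Fm (P A A' u) = u) \<and>
        (\<forall>X \<in> Obj C. \<forall>Y \<in> Obj C. \<forall>Z \<in> Obj C. \<forall>T \<in> Obj C.
           \<forall>f \<in> Hom C X Y. \<forall>h \<in> Hom C Z T. \<forall>g \<in> Hom D (Fo Y) (Fo Z).
             P X T (cmp D (Fm h) (cmp D g (Fm f))) = cmp C h (cmp C (P Y Z g) f)))"

end

theory Submission
  imports Defs
begin

lemma hom_cmp:
  assumes "is_category C" "A \<in> Obj C" "B \<in> Obj C" "D' \<in> Obj C"
    "f \<in> Hom C A B" "g \<in> Hom C B D'"
  shows "cmp C g f \<in> Hom C A D'"
  using assms unfolding is_category_def by blast

lemma fun_obj: "is_functor C D Fo Fm \<Longrightarrow> A \<in> Obj C \<Longrightarrow> Fo A \<in> Obj D"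
  unfolding is_functor_def by blast

lemma fun_hom: "is_functor C D Fo Fm \<Longrightarrow> A \<in> Obj C \<Longrightarrow> B \<in> Obj C \<Longrightarrow> f \<in> Hom C A B
  \<Longrightarrow> Fm f \<in> Hom D (Fo A) (Fo B)"
  unfolding is_functor_def by blast

lemma fun_cmp: "is_functor C D Fo Fm \<Longrightarrow> A \<in> Obj C \<Longrightarrow> B \<in> Obj C \<Longrightarrow> E \<in> Obj C
  \<Longrightarrow> f \<in> Hom C A B \<Longrightarrow> g \<in> Hom C B E \<Longrightarrow> Fm (cmp C g f) = cmp D (Fm g) (Fm f)"
  unfolding is_functor_def by blast

theorem proposition2p3:
  fixes C :: "('o1, 'm1) category" and D :: "('o2, 'm2) category"
    and E :: "('o3, 'm3) category"
    and Go :: "'o1 \<Rightarrow> 'o2" and Gm :: "'m1 \<Rightarrow> 'm2"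
    and Ho :: "'o2 \<Rightarrow> 'o3" and Hm :: "'m2 \<Rightarrow> 'm3"
  assumes "is_category C" and "is_category D" and "is_category E"
    and "is_functor C D Go Gm" and "is_functor D E Ho Hm"
  shows "(naturally_full C D Go Gm \<and> naturally_full D E Ho Hm
            \<longrightarrow> naturally_full C E (Ho \<circ> Go) (Hm \<circ> Gm))
       \<and> (naturally_full C E (Ho \<circ> Go) (Hm \<circ> Gm) \<and> faithful D E Ho Hm
            \<longrightarrow> naturally_full C D Go Gm)"
proof (intro conjI impI)
  note G = assms(4) and H = assms(5)
  assume "naturally_full C D Go Gm \<and> naturally_full D E Ho Hm"
  then have nG: "naturally_full C D Go Gm" and nH: "naturally_full D E Ho Hm" by auto
  obtain PG where PGa: "\<forall>A \<in> Obj C. \<forall>A' \<in> Obj C. \<forall>u \<in> Hom D (Go A) (Go A').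
            PG A A' u \<in> Hom C A A' \<and> Gm (PG A A' u) = u" and PGb: "
        (\<forall>X \<in> Obj C. \<forall>Y \<in> Obj C. \<forall>Z \<in> Obj C. \<forall>T \<in> Obj C.
           \<forall>f \<in> Hom C X Y. \<forall>h \<in> Hom C Z T. \<forall>g \<in> Hom D (Go Y) (Go Z).
             PG X T (cmp D (Gm h) (cmp D g (Gm f))) = cmp C h (cmp C (PG Y Z g) f))"
    using nG unfolding naturally_full_def by blast
  obtain PH where PHa: "\<forall>A \<in> Obj D. \<forall>A' \<in> Obj D. \<forall>u \<in> Hom E (Ho A) (Ho A').
            PH A A' u \<in> Hom D A A' \<and> Hm (PH A A' u) = u" and PHb: "
        (\<forall>X \<in> Obj D. \<forall>Y \<in> Obj D. \<forall>Z \<in> Obj D. \<forall>T \<in> Obj D.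
           \<forall>f \<in> Hom D X Y. \<forall>h \<in> Hom D Z T. \<forall>g \<in> Hom E (Ho Y) (Ho Z).
             PH X T (cmp E (Hm h) (cmp E g (Hm f))) = cmp D h (cmp D (PH Y Z g) f))"
    using nH unfolding naturally_full_def by blast
  have PG1: "\<And>A A' u. A \<in> Obj C \<Longrightarrow> A' \<in> Obj C \<Longrightarrow> u \<in> Hom D (Go A) (Go A') \<Longrightarrow>
            PG A A' u \<in> Hom C A A' \<and> Gm (PG A A' u) = u" using PGa by blast
  have PG2: "\<And>X Y Z T f h g. X \<in> Obj C \<Longrightarrow> Y \<in> Obj C \<Longrightarrow> Z \<in> Obj C \<Longrightarrow> T \<in> Obj C \<Longrightarrow>
           f \<in> Hom C X Y \<Longrightarrow> h \<in> Hom C Z T \<Longrightarrow> g \<in> Hom D (Go Y) (Go Z) \<Longrightarrow>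
           PG X T (cmp D (Gm h) (cmp D g (Gm f))) = cmp C h (cmp C (PG Y Z g) f)" using PGb by blast
  have PH1: "\<And>A A' u. A \<in> Obj D \<Longrightarrow> A' \<in> Obj D \<Longrightarrow> u \<in> Hom E (Ho A) (Ho A') \<Longrightarrow>
            PH A A' u \<in> Hom D A A' \<and> Hm (PH A A' u) = u" using PHa by blast
  have PH2: "\<And>X Y Z T f h g. X \<in> Obj D \<Longrightarrow> Y \<in> Obj D \<Longrightarrow> Z \<in> Obj D \<Longrightarrow> T \<in> Obj D \<Longrightarrow>
           f \<in> Hom D X Y \<Longrightarrow> h \<in> Hom D Z T \<Longrightarrow> g \<in> Hom E (Ho Y) (Ho Z) \<Longrightarrow>
           PH X T (cmp E (Hm h) (cmp E g (Hm f))) = cmp D h (cmp D (PH Y Z g) f)" using PHb by blast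
  show "naturally_full C E (Ho \<circ> Go) (Hm \<circ> Gm)"
    unfolding naturally_full_def
  proof (rule exI[where x="\<lambda>A A' u. PG A A' (PH (Go A) (Go A') u)"], intro conjI ballI)
    fix A A' u assume a: "A \<in> Obj C" "A' \<in> Obj C" "u \<in> Hom E ((Ho \<circ> Go) A) ((Ho \<circ> Go) A')"
    have "PH (Go A) (Go A') u \<in> Hom D (Go A) (Go A') \<and> Hm (PH (Go A) (Go A') u) = u"
      using PH1 a fun_obj[OF G] by simp
    then show "PG A A' (PH (Go A) (Go A') u) \<in> Hom C A A'"
      "(Hm \<circ> Gm) (PG A A' (PH (Go A) (Go A') u)) = u"
      using PG1 a by auto
  next
    fix X Y Z T f h g assume a: "X \<in> Obj C" "Y \<in> Obj C" "Z \<in> Obj C" "T \<in> Obj C"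
      "f \<in> Hom C X Y" "h \<in> Hom C Z T" "g \<in> Hom E ((Ho \<circ> Go) Y) ((Ho \<circ> Go) Z)"
    have "PH (Go X) (Go T) (cmp E (Hm (Gm h)) (cmp E g (Hm (Gm f))))
        = cmp D (Gm h) (cmp D (PH (Go Y) (Go Z) g) (Gm f))"
      using PH2 a fun_obj[OF G] fun_hom[OF G] by simp
    moreover have "PH (Go Y) (Go Z) g \<in> Hom D (Go Y) (Go Z)"
      using PH1 a fun_obj[OF G] by simp
    ultimately show "PG X T (PH (Go X) (Go T) (cmp E ((Hm \<circ> Gm) h) (cmp E g ((Hm \<circ> Gm) f))))
        = cmp C h (cmp C (PG Y Z (PH (Go Y) (Go Z) g)) f)"
      using PG2 a by simp
  qed
next
  note G = assms(4) and H = assms(5)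
  assume "naturally_full C E (Ho \<circ> Go) (Hm \<circ> Gm) \<and> faithful D E Ho Hm"
  then have nP: "naturally_full C E (Ho \<circ> Go) (Hm \<circ> Gm)" and F: "faithful D E Ho Hm" by auto
  obtain P where Pa: "\<forall>A \<in> Obj C. \<forall>A' \<in> Obj C. \<forall>u \<in> Hom E ((Ho \<circ> Go) A) ((Ho \<circ> Go) A').
            P A A' u \<in> Hom C A A' \<and> (Hm \<circ> Gm) (P A A' u) = u" and Pb: "
        (\<forall>X \<in> Obj C. \<forall>Y \<in> Obj C. \<forall>Z \<in> Obj C. \<forall>T \<in> Obj C.
           \<forall>f \<in> Hom C X Y. \<forall>h \<in> Hom C Z T. \<forall>g \<in> Hom E ((Ho \<circ> Go) Y) ((Ho \<circ> Go) Z).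
             P X T (cmp E ((Hm \<circ> Gm) h) (cmp E g ((Hm \<circ> Gm) f))) = cmp C h (cmp C (P Y Z g) f))"
    using nP unfolding naturally_full_def by blast
  have P1: "\<And>A A' u. A \<in> Obj C \<Longrightarrow> A' \<in> Obj C \<Longrightarrow> u \<in> Hom E (Ho (Go A)) (Ho (Go A')) \<Longrightarrow>
            P A A' u \<in> Hom C A A' \<and> Hm (Gm (P A A' u)) = u" using Pa by simp
  have P2: "\<And>X Y Z T f h g. X \<in> Obj C \<Longrightarrow> Y \<in> Obj C \<Longrightarrow> Z \<in> Obj C \<Longrightarrow> T \<in> Obj C \<Longrightarrow>
           f \<in> Hom C X Y \<Longrightarrow> h \<in> Hom C Z T \<Longrightarrow> g \<in> Hom E (Ho (Go Y)) (Ho (Go Z)) \<Longrightarrow>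
           P X T (cmp E (Hm (Gm h)) (cmp E g (Hm (Gm f)))) = cmp C h (cmp C (P Y Z g) f)" using Pb by simp
  show "naturally_full C D Go Gm"
    unfolding naturally_full_def
  proof (rule exI[where x="\<lambda>A A' u. P A A' (Hm u)"], intro conjI ballI)
    fix A A' u assume a: "A \<in> Obj C" "A' \<in> Obj C" "u \<in> Hom D (Go A) (Go A')"
    have hu: "Hm u \<in> Hom E (Ho (Go A)) (Ho (Go A'))"
      using fun_hom[OF H] fun_obj[OF G] a by blast
    then show pin: "P A A' (Hm u) \<in> Hom C A A'" using P1 a by blast
    have "Gm (P A A' (Hm u)) \<in> Hom D (Go A) (Go A')" using fun_hom[OF G] pin a by blast
    moreover have "Hm (Gm (P A A' (Hm u))) = Hm u" using P1 a hu by blast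
    moreover have "inj_on Hm (Hom D (Go A) (Go A'))"
      using F a fun_obj[OF G] unfolding faithful_def by blast
    ultimately show "Gm (P A A' (Hm u)) = u" using a(3) by (meson inj_onD)
  next
    fix X Y Z T f h g assume a: "X \<in> Obj C" "Y \<in> Obj C" "Z \<in> Obj C" "T \<in> Obj C"
      "f \<in> Hom C X Y" "h \<in> Hom C Z T" "g \<in> Hom D (Go Y) (Go Z)"
    have o: "Go X \<in> Obj D" "Go Y \<in> Obj D" "Go Z \<in> Obj D" "Go T \<in> Obj D"
      using a fun_obj[OF G] by auto
    have gf: "Gm f \<in> Hom D (Go X) (Go Y)" and gh: "Gm h \<in> Hom D (Go Z) (Go T)"
      using a fun_hom[OF G] by auto
    have c1: "cmp D g (Gm f) \<in> Hom D (Go X) (Go Z)"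
      using hom_cmp[OF assms(2) o(1,2,3) gf a(7)] .
    have "Hm (cmp D (Gm h) (cmp D g (Gm f))) = cmp E (Hm (Gm h)) (Hm (cmp D g (Gm f)))"
      using fun_cmp[OF H o(1,3,4) c1 gh] .
    also have "Hm (cmp D g (Gm f)) = cmp E (Hm g) (Hm (Gm f))"
      using fun_cmp[OF H o(1,2,3) gf a(7)] .
    finally have eq: "Hm (cmp D (Gm h) (cmp D g (Gm f))) = cmp E (Hm (Gm h)) (cmp E (Hm g) (Hm (Gm f)))" .
    have "Hm g \<in> Hom E (Ho (Go Y)) (Ho (Go Z))" using fun_hom[OF H] o a by blast
    then show "P X T (Hm (cmp D (Gm h) (cmp D g (Gm f)))) = cmp C h (cmp C (P Y Z (Hm g)) f)"
      unfolding eq using P2 a by blast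
  qed
qed

end
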